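(* Let $\Omega=(0,l_x)\times(0,l_y)\times(0,l_z)$ be discretized by cubic cells of side $h=l_x/N_x=l_y/N_y=l_z/N_z$ with cell centers $(x_i,y_j,z_k)=((i-\tfrac12)h,(j-\tfrac12)h,(k-\tfrac12)h)$, $1\le i\le N_x$, $1\le j\le N_y$, $1\le k\le N_z$. Let $\epsilon>0$, $S>0$, $\Delta t>0$, $F(\phi)=\frac14(\phi^2-1)^2$, and let $g_{ijk}\ge 0$ be given grid values (in the paper $g_{ijk}=g(\mathbf{x}_{ijk})$ with $g=1-\phi_0^2+\lambda\ge\lambda>0$). Let $n\ge1$ and let grid functions $\phi^{n-1},\phi^n$ be given; set $\phi^*=\frac32\phi^n-\frac12\phi^{n-1}$. Suppose grid functions $\phi^{n+1},\mu^{n+\frac12}$ and a real number $Q^{n+\frac12}$ satisfy, for all $i,j,k$, $$\frac{\phi^{n+1}_{ijk}-\phi^n_{ijk}}{\Delta t}=-g_{ijk}\mu^{n+\frac12}_{ijk},$$ $$\mu^{n+\frac12}_{ijk}=Q^{n+\frac12}\frac{F'(\phi^*_{ijk})}{\epsilon^2}-\Delta_d\Big(\frac{\phi^{n+1}_{ijk}+\phi^n_{ijk}}{2}\Big)+S\Big(\frac{\phi^{n+1}_{ijk}+\phi^n_{ijk}}{2}-\phi^*_{ijk}\Big),$$ $$\big(F(\phi^{n+1})-F(\phi^n),\mathbf{1}\big)_h=Q^{n+\frac12}\big(F'(\phi^* ),\phi^{n+1}-\phi^n\big)_h,$$ where all grid functions satisfy the discrete homogeneous Neumann conditions described in the context.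 Then $$\frac{1}{\epsilon^2}\big(F(\phi^{n+1})-F(\phi^n),\mathbf{1}\big)_h+\frac12\big(\|\nabla_d\phi^{n+1}\|_e^2-\|\nabla_d\phi^n\|_e^2\big)+\frac S4\big(\|\phi^{n+1}-\phi^n\|_h^2-\|\phi^n-\phi^{n-1}\|_h^2\big)$$ $$=-\Delta t\,\|\sqrt{g}\,\mu^{n+\frac12}\|_h^2-\frac S4\|\phi^{n+1}-2\phi^n+\phi^{n-1}\|_h^2\le 0,$$ and consequently the discrete energy $$\tilde E(\phi^{n+1},\phi^n):=\frac{1}{\epsilon^2}\big(F(\phi^{n+1}),\mathbf{1}\big)_h+\frac12\|\nabla_d\phi^{n+1}\|_e^2+\frac S4\|\phi^{n+1}-\phi^n\|_h^2$$ satisfies $\tilde E(\phi^{n+1},\phi^n)\le\tilde E(\phi^n,\phi^{n-1})$ (unconditional energy stability, for any $\Delta t>0$).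
   Context: Discrete Neumann conditions (ghost values): $\phi_{0,jk}=\phi_{1,jk}$, $\phi_{N_x+1,jk}=\phi_{N_x,jk}$, $\phi_{i,0,k}=\phi_{i,1,k}$, $\phi_{i,N_y+1,k}=\phi_{i,N_y,k}$, $\phi_{ij,0}=\phi_{ij,1}$, $\phi_{ij,N_z+1}=\phi_{ij,N_z}$, and likewise for $\mu$. The discrete Laplacian is $\Delta_d\phi_{ijk}=(\phi_{i+1,jk}+\phi_{i-1,jk}+\phi_{i,j+1,k}+\phi_{i,j-1,k}+\phi_{ij,k+1}+\phi_{ij,k-1}-6\phi_{ijk})/h^2$. Inner products: $(\phi,\psi)_h=h^3\sum_{i=1}^{N_x}\sum_{j=1}^{N_y}\sum_{k=1}^{N_z}\phi_{ijk}\psi_{ijk}$, $\|\phi\|_h^2=(\phi,\phi)_h$, $\mathbf{1}$ is the grid function identically $1$, and $\sqrt{g}\mu$ denotes the grid function $\sqrt{g_{ijk}}\mu_{ijk}$. With $D_x\phi_{i+\frac12,jk}=(\phi_{i+1,jk}-\phi_{ijk})/h$ and analogously $D_y,D_z$, $(\nabla_d\phi,\nabla_d\psi)_e=h^3\big(\sum_{i=0}^{N_x}\sum_{j=1}^{N_y}\sum_{k=1}^{N_z}D_x\phi_{i+\frac12,jk}D_x\psi_{i+\frac12,jk}+\sum_{i=1}^{N_x}\sum_{j=0}^{N_y}\sum_{k=1}^{N_z}D_y\phi_{i,j+\frac12,k}D_y\psi_{i,j+\frac12,k}+\sum_{i=1}^{N_x}\sum_{j=1}^{N_y}\sum_{k=0}^{N_z}D_z\phi_{ij,k+\frac12}D_z\psi_{ij,k+\frac12}\big)$,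 and $\|\nabla_d\phi\|_e^2=(\nabla_d\phi,\nabla_d\phi)_e$. *)

theory Defs
  imports Complex_Main
begin

text \<open>Grid functions on the cell-centred grid, including ghost layers:
  indices 0 and N+1 are ghost cells, 1..N are interior cells.\<close>
type_synonym grid = "nat \<Rightarrow> nat \<Rightarrow> nat \<Rightarrow> real"

definition F :: "real \<Rightarrow> real" where
  "F x = (x^2 - 1)^2 / 4"

definition dF :: "real \<Rightarrow> real" where
  "dF x = x^3 - x"

definition neumann :: "nat \<Rightarrow> nat \<Rightarrow> nat \<Rightarrow> grid \<Rightarrow> bool" where
  "neumann Nx Ny Nz \<phi> \<longleftrightarrow>
     (\<forall>j\<in>{1..Ny}. \<forall>k\<in>{1..Nz}. \<phi> 0 j k = \<phi> 1 j k \<and> \<phi> (Nx+1) j k = \<phi> Nx j k) \<and>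
     (\<forall>i\<in>{1..Nx}. \<forall>k\<in>{1..Nz}. \<phi> i 0 k = \<phi> i 1 k \<and> \<phi> i (Ny+1) k = \<phi> i Ny k) \<and>
     (\<forall>i\<in>{1..Nx}. \<forall>j\<in>{1..Ny}. \<phi> i j 0 = \<phi> i j 1 \<and> \<phi> i j (Nz+1) = \<phi> i j Nz)"

definition lap_d :: "real \<Rightarrow> grid \<Rightarrow> nat \<Rightarrow> nat \<Rightarrow> nat \<Rightarrow> real" where
  "lap_d h \<phi> i j k =
     (\<phi> (i+1) j k + \<phi> (i-1) j k + \<phi> i (j+1) k + \<phi> i (j-1) k
      + \<phi> i j (k+1) + \<phi> i j (k-1) - 6 * \<phi> i j k) / h^2"

definition inner_h :: "nat \<Rightarrow> nat \<Rightarrow> nat \<Rightarrow> real \<Rightarrow> grid \<Rightarrow> grid \<Rightarrow> real" where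
  "inner_h Nx Ny Nz h \<phi> \<psi> =
     h^3 * (\<Sum>i=1..Nx. \<Sum>j=1..Ny. \<Sum>k=1..Nz. \<phi> i j k * \<psi> i j k)"

definition norm_h :: "nat \<Rightarrow> nat \<Rightarrow> nat \<Rightarrow> real \<Rightarrow> grid \<Rightarrow> real" where
  "norm_h Nx Ny Nz h \<phi> = sqrt (inner_h Nx Ny Nz h \<phi> \<phi>)"

text \<open>Edge-centred difference quotients D_x, D_y, D_z evaluated at i+1/2 etc.\<close>
definition Dx :: "real \<Rightarrow> grid \<Rightarrow> nat \<Rightarrow> nat \<Rightarrow> nat \<Rightarrow> real" where
  "Dx h \<phi> i j k = (\<phi> (i+1) j k - \<phi> i j k) / h"
definition Dy :: "real \<Rightarrow> grid \<Rightarrow> nat \<Rightarrow> nat \<Rightarrow> nat \<Rightarrow> real" where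
  "Dy h \<phi> i j k = (\<phi> i (j+1) k - \<phi> i j k) / h"
definition Dz :: "real \<Rightarrow> grid \<Rightarrow> nat \<Rightarrow> nat \<Rightarrow> nat \<Rightarrow> real" where
  "Dz h \<phi> i j k = (\<phi> i j (k+1) - \<phi> i j k) / h"

definition inner_e :: "nat \<Rightarrow> nat \<Rightarrow> nat \<Rightarrow> real \<Rightarrow> grid \<Rightarrow> grid \<Rightarrow> real" where
  "inner_e Nx Ny Nz h \<phi> \<psi> = h^3 *
     ((\<Sum>i=0..Nx. \<Sum>j=1..Ny. \<Sum>k=1..Nz. Dx h \<phi> i j k * Dx h \<psi> i j k)
    + (\<Sum>i=1..Nx. \<Sum>j=0..Ny. \<Sum>k=1..Nz. Dy h \<phi> i j k * Dy h \<psi> i j k)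
    + (\<Sum>i=1..Nx. \<Sum>j=1..Ny. \<Sum>k=0..Nz. Dz h \<phi> i j k * Dz h \<psi> i j k))"

definition norm_e :: "nat \<Rightarrow> nat \<Rightarrow> nat \<Rightarrow> real \<Rightarrow> grid \<Rightarrow> real" where
  "norm_e Nx Ny Nz h \<phi> = sqrt (inner_e Nx Ny Nz h \<phi> \<phi>)"

definition Etilde :: "nat \<Rightarrow> nat \<Rightarrow> nat \<Rightarrow> real \<Rightarrow> real \<Rightarrow> real \<Rightarrow> grid \<Rightarrow> grid \<Rightarrow> real" where
  "Etilde Nx Ny Nz h \<epsilon> S \<phi>1 \<phi>0 =
     inner_h Nx Ny Nz h (\<lambda>i j k. F (\<phi>1 i j k)) (\<lambda>_ _ _. 1) / \<epsilon>^2
     + (norm_e Nx Ny Nz h \<phi>1)^2 / 2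
     + S / 4 * (norm_h Nx Ny Nz h (\<lambda>i j k. \<phi>1 i j k - \<phi>0 i j k))^2"

end

theory Submission
  imports Defs
begin

lemma sbp_gen:
  fixes d v :: "nat \<Rightarrow> real"
  shows "(\<Sum>i=1..N. (d i - d (i-1)) * v i) = d N * v (N+1) - d 0 * v 0 - (\<Sum>i=0..N. d i * (v (i+1) - v i))"
  by (induction N) (auto simp: algebra_simps)

lemma sbp1:
  fixes u v :: "nat \<Rightarrow> real"
  assumes "u 0 = u 1" "u (N+1) = u N"
  shows "(\<Sum>i=1..N. (u (i+1) + u (i-1) - 2 * u i) * v i) = - (\<Sum>i=0..N. (u (i+1) - u i) * (v (i+1) - v i))"
proof -
  have "(\<Sum>i=1..N. (u (i+1) + u (i-1) - 2 * u i) * v i) = (\<Sum>i=1..N. ((\<lambda>i. u (i+1) - u i) i - (\<lambda>i. u (i+1) - u i) (i-1)) * v i)"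
    by (rule sum.cong) auto
  also have "\<dots> = - (\<Sum>i=0..N. (u (i+1) - u i) * (v (i+1) - v i))"
    using sbp_gen[where d="\<lambda>i. u (i+1) - u i" and N=N and v=v] assms by simp
  finally show ?thesis .
qed

definition T3 :: "nat \<Rightarrow> nat \<Rightarrow> nat \<Rightarrow> grid \<Rightarrow> real" where
  "T3 Nx Ny Nz f = (\<Sum>i=1..Nx. \<Sum>j=1..Ny. \<Sum>k=1..Nz. f i j k)"

lemma T3_cong:
  "(\<And>i j k. i\<in>{1..Nx} \<Longrightarrow> j\<in>{1..Ny} \<Longrightarrow> k\<in>{1..Nz} \<Longrightarrow> f i j k = g i j k) \<Longrightarrow> T3 Nx Ny Nz f = T3 Nx Ny Nz g"
  unfolding T3_def by (intro sum.cong) auto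

lemma T3_lin3: "T3 Nx Ny Nz (\<lambda>i j k. a * f i j k + b * g i j k + c * r i j k)
   = a * T3 Nx Ny Nz f + b * T3 Nx Ny Nz g + c * T3 Nx Ny Nz r"
  unfolding T3_def by (simp add: sum.distrib sum_distrib_left)

lemma sbpX:
  fixes u v :: grid
  assumes "\<forall>j\<in>{1..Ny}. \<forall>k\<in>{1..Nz}. u 0 j k = u 1 j k \<and> u (Nx+1) j k = u Nx j k"
  shows "(\<Sum>i=1..Nx. \<Sum>j=1..Ny. \<Sum>k=1..Nz. (u (i+1) j k + u (i-1) j k - 2 * u i j k) * v i j k)
     = - (\<Sum>i=0..Nx. \<Sum>j=1..Ny. \<Sum>k=1..Nz. (u (i+1) j k - u i j k) * (v (i+1) j k - v i j k))"
proof -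
  have "(\<Sum>i=1..Nx. \<Sum>j=1..Ny. \<Sum>k=1..Nz. (u (i+1) j k + u (i-1) j k - 2 * u i j k) * v i j k)
     = (\<Sum>j=1..Ny. \<Sum>k=1..Nz. \<Sum>i=1..Nx. (u (i+1) j k + u (i-1) j k - 2 * u i j k) * v i j k)"
    by (subst sum.swap, rule sum.cong, simp, rule sum.swap)
  also have "\<dots> = (\<Sum>j=1..Ny. \<Sum>k=1..Nz. - (\<Sum>i=0..Nx. (u (i+1) j k - u i j k) * (v (i+1) j k - v i j k)))"
    using assms by (intro sum.cong refl sbp1) auto
  also have "\<dots> = - (\<Sum>i=0..Nx. \<Sum>j=1..Ny. \<Sum>k=1..Nz. (u (i+1) j k - u i j k) * (v (i+1) j k - v i j k))"
    by (simp add: sum_negf, subst sum.swap, rule sum.cong, simp, rule sum.swap)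
  finally show ?thesis .
qed

lemma sbpY:
  fixes u v :: grid
  assumes "\<forall>i\<in>{1..Nx}. \<forall>k\<in>{1..Nz}. u i 0 k = u i 1 k \<and> u i (Ny+1) k = u i Ny k"
  shows "(\<Sum>i=1..Nx. \<Sum>j=1..Ny. \<Sum>k=1..Nz. (u i (j+1) k + u i (j-1) k - 2 * u i j k) * v i j k)
     = - (\<Sum>i=1..Nx. \<Sum>j=0..Ny. \<Sum>k=1..Nz. (u i (j+1) k - u i j k) * (v i (j+1) k - v i j k))"
proof -
  have "(\<Sum>i=1..Nx. \<Sum>j=1..Ny. \<Sum>k=1..Nz. (u i (j+1) k + u i (j-1) k - 2 * u i j k) * v i j k)
     = (\<Sum>i=1..Nx. \<Sum>k=1..Nz. \<Sum>j=1..Ny. (u i (j+1) k + u i (j-1) k - 2 * u i j k) * v i j k)"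
    by (rule sum.cong, simp, rule sum.swap)
  also have "\<dots> = (\<Sum>i=1..Nx. \<Sum>k=1..Nz. - (\<Sum>j=0..Ny. (u i (j+1) k - u i j k) * (v i (j+1) k - v i j k)))"
    using assms by (intro sum.cong refl sbp1) auto
  also have "\<dots> = - (\<Sum>i=1..Nx. \<Sum>j=0..Ny. \<Sum>k=1..Nz. (u i (j+1) k - u i j k) * (v i (j+1) k - v i j k))"
    by (simp add: sum_negf, rule sum.cong, simp, rule sum.swap)
  finally show ?thesis .
qed

lemma sbpZ:
  fixes u v :: grid
  assumes "\<forall>i\<in>{1..Nx}. \<forall>j\<in>{1..Ny}. u i j 0 = u i j 1 \<and> u i j (Nz+1) = u i j Nz"
  shows "(\<Sum>i=1..Nx. \<Sum>j=1..Ny. \<Sum>k=1..Nz. (u i j (k+1) + u i j (k-1) - 2 * u i j k) * v i j k)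
     = - (\<Sum>i=1..Nx. \<Sum>j=1..Ny. \<Sum>k=0..Nz. (u i j (k+1) - u i j k) * (v i j (k+1) - v i j k))"
proof -
  have "(\<Sum>i=1..Nx. \<Sum>j=1..Ny. \<Sum>k=1..Nz. (u i j (k+1) + u i j (k-1) - 2 * u i j k) * v i j k)
     = (\<Sum>i=1..Nx. \<Sum>j=1..Ny. - (\<Sum>k=0..Nz. (u i j (k+1) - u i j k) * (v i j (k+1) - v i j k)))"
    using assms by (intro sum.cong refl sbp1) auto
  then show ?thesis by (simp add: sum_negf)
qed

lemma S3_lin: "(\<Sum>i\<in>A. \<Sum>j\<in>B. \<Sum>k\<in>C. (a::real) * (f i j k + g i j k + r i j k))
  = a * ((\<Sum>i\<in>A. \<Sum>j\<in>B. \<Sum>k\<in>C. f i j k) + (\<Sum>i\<in>A. \<Sum>j\<in>B. \<Sum>k\<in>C. g i j k) + (\<Sum>i\<in>A. \<Sum>j\<in>B. \<Sum>k\<in>C. r i j k))"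
  by (simp add: sum.distrib sum_distrib_left distrib_left)

lemma S3_scale: "(\<Sum>i\<in>A. \<Sum>j\<in>B. \<Sum>k\<in>C. (a::real) * f i j k)
  = a * (\<Sum>i\<in>A. \<Sum>j\<in>B. \<Sum>k\<in>C. f i j k)"
  by (simp add: sum_distrib_left)

lemma lap_inner:
  assumes N: "neumann Nx Ny Nz u" and h: "h \<noteq> 0"
  shows "inner_h Nx Ny Nz h (lap_d h u) v = - inner_e Nx Ny Nz h u v"
proof -
  have 1: "(\<Sum>i=1..Nx. \<Sum>j=1..Ny. \<Sum>k=1..Nz. lap_d h u i j k * v i j k)
    = (\<Sum>i=1..Nx. \<Sum>j=1..Ny. \<Sum>k=1..Nz. (1/h^2) * (
        (u (i+1) j k + u (i-1) j k - 2 * u i j k) * v i j k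
      + (u i (j+1) k + u i (j-1) k - 2 * u i j k) * v i j k
      + (u i j (k+1) + u i j (k-1) - 2 * u i j k) * v i j k))"
    by (intro sum.cong refl) (simp add: lap_d_def field_simps)
  have 2: "(\<Sum>i=0..Nx. \<Sum>j=1..Ny. \<Sum>k=1..Nz. Dx h u i j k * Dx h v i j k)
     = (1/h^2) * (\<Sum>i=0..Nx. \<Sum>j=1..Ny. \<Sum>k=1..Nz. (u (i+1) j k - u i j k) * (v (i+1) j k - v i j k))"
    unfolding S3_scale[symmetric] by (intro sum.cong refl) (simp add: Dx_def field_simps power2_eq_square)
  have 3: "(\<Sum>i=1..Nx. \<Sum>j=0..Ny. \<Sum>k=1..Nz. Dy h u i j k * Dy h v i j k)
     = (1/h^2) * (\<Sum>i=1..Nx. \<Sum>j=0..Ny. \<Sum>k=1..Nz. (u i (j+1) k - u i j k) * (v i (j+1) k - v i j k))"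
    unfolding S3_scale[symmetric] by (intro sum.cong refl) (simp add: Dy_def field_simps power2_eq_square)
  have 4: "(\<Sum>i=1..Nx. \<Sum>j=1..Ny. \<Sum>k=0..Nz. Dz h u i j k * Dz h v i j k)
     = (1/h^2) * (\<Sum>i=1..Nx. \<Sum>j=1..Ny. \<Sum>k=0..Nz. (u i j (k+1) - u i j k) * (v i j (k+1) - v i j k))"
    unfolding S3_scale[symmetric] by (intro sum.cong refl) (simp add: Dz_def field_simps power2_eq_square)
  have X: "\<forall>j\<in>{1..Ny}. \<forall>k\<in>{1..Nz}. u 0 j k = u 1 j k \<and> u (Nx+1) j k = u Nx j k"
   and Y: "\<forall>i\<in>{1..Nx}. \<forall>k\<in>{1..Nz}. u i 0 k = u i 1 k \<and> u i (Ny+1) k = u i Ny k"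
   and Z: "\<forall>i\<in>{1..Nx}. \<forall>j\<in>{1..Ny}. u i j 0 = u i j 1 \<and> u i j (Nz+1) = u i j Nz"
    using N unfolding neumann_def by auto
  show ?thesis
    unfolding inner_h_def inner_e_def 1 2 3 4 S3_lin sbpX[OF X] sbpY[OF Y] sbpZ[OF Z]
    by (simp add: algebra_simps)
qed

lemma lin_h: fixes T q A r B s C h :: real
  shows "T = q*A + r*B + s*C \<Longrightarrow> h*T = q*(h*A) + r*(h*B) + s*(h*C)"
  by (simp add: algebra_simps)

lemma p1: fixes G m a d :: real assumes "G \<ge> 0" "d > 0" "a / d = - G * m"
  shows "sqrt G * m * (sqrt G * m) = (- (1/d)) * (m * a) + 0 * 0 + 0 * 0"
proof -
  have a: "a = - d * G * m" using assms(2,3) by (simp add: field_simps)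
  have s: "sqrt G * sqrt G = G" using assms(1) by simp
  have "sqrt G * m * (sqrt G * m) = (sqrt G * sqrt G) * m * m" by (simp only: ac_simps)
  also have "\<dots> = (- (1/d)) * (m * a)" using assms(1,2) by (simp add: s a)
  finally show ?thesis by simp
qed

lemma S3_half: "(\<Sum>i\<in>A. \<Sum>j\<in>B. \<Sum>k\<in>C. 1/2 * f i j k - 1/2 * (g i j k::real))
  = 1/2 * (\<Sum>i\<in>A. \<Sum>j\<in>B. \<Sum>k\<in>C. f i j k) - 1/2 * (\<Sum>i\<in>A. \<Sum>j\<in>B. \<Sum>k\<in>C. g i j k)"
  by (simp add: sum_subtractf sum_distrib_left)

lemma e4: "inner_e Nx Ny Nz h (\<lambda>a b c. (p a b c + n a b c) / 2) (\<lambda>a b c. p a b c - n a b c)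
   = 1/2 * inner_e Nx Ny Nz h p p - 1/2 * inner_e Nx Ny Nz h n n"
proof -
  have pw: "(A + B)/2 * (A - B) = 1/2 * (A*A) - 1/2*(B*B)" for A B :: real by (simp add: field_simps)
  have x: "Dx h (\<lambda>a b c. (p a b c + n a b c) / 2) i j k * Dx h (\<lambda>a b c. p a b c - n a b c) i j k
     = 1/2 * (Dx h p i j k * Dx h p i j k) - 1/2 * (Dx h n i j k * Dx h n i j k)" for i j k
  proof -
    have 1: "Dx h (\<lambda>a b c. (p a b c + n a b c) / 2) i j k = (Dx h p i j k + Dx h n i j k)/2"
      by (simp add: Dx_def add_divide_distrib diff_divide_distrib algebra_simps)
    have 2: "Dx h (\<lambda>a b c. p a b c - n a b c) i j k = Dx h p i j k - Dx h n i j k"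
      by (cases "h = 0") (simp_all add: Dx_def field_simps)
    show ?thesis unfolding 1 2 by (rule pw)
  qed
  have y: "Dy h (\<lambda>a b c. (p a b c + n a b c) / 2) i j k * Dy h (\<lambda>a b c. p a b c - n a b c) i j k
     = 1/2 * (Dy h p i j k * Dy h p i j k) - 1/2 * (Dy h n i j k * Dy h n i j k)" for i j k
  proof -
    have 1: "Dy h (\<lambda>a b c. (p a b c + n a b c) / 2) i j k = (Dy h p i j k + Dy h n i j k)/2"
      by (simp add: Dy_def add_divide_distrib diff_divide_distrib algebra_simps)
    have 2: "Dy h (\<lambda>a b c. p a b c - n a b c) i j k = Dy h p i j k - Dy h n i j k"
      by (cases "h = 0") (simp_all add: Dy_def field_simps)
    show ?thesis unfolding 1 2 by (rule pw)
  qed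
  have z: "Dz h (\<lambda>a b c. (p a b c + n a b c) / 2) i j k * Dz h (\<lambda>a b c. p a b c - n a b c) i j k
     = 1/2 * (Dz h p i j k * Dz h p i j k) - 1/2 * (Dz h n i j k * Dz h n i j k)" for i j k
  proof -
    have 1: "Dz h (\<lambda>a b c. (p a b c + n a b c) / 2) i j k = (Dz h p i j k + Dz h n i j k)/2"
      by (simp add: Dz_def add_divide_distrib diff_divide_distrib algebra_simps)
    have 2: "Dz h (\<lambda>a b c. p a b c - n a b c) i j k = Dz h p i j k - Dz h n i j k"
      by (cases "h = 0") (simp_all add: Dz_def field_simps)
    show ?thesis unfolding 1 2 by (rule pw)
  qed
  show ?thesis unfolding inner_e_def x y z S3_half by (simp add: algebra_simps)
qed
lemma p2: fixes mu Q d e L S p n m :: real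
  assumes "mu = Q * d / e^2 - L + S * ((p + n) / 2 - (3/2 * n - 1/2 * m))"
  shows "mu * (p - n) = Q/e^2 * (d * (p - n)) + (-1) * (L * (p - n)) + S/2 * ((p - 2*n + m) * (p - n))"
  unfolding assms by (simp add: field_simps)
lemma p3: fixes p n m :: real shows
  "(p - 2*n + m) * (p - n) = 1/2 * ((p - n) * (p - n)) + (-1/2) * ((n - m) * (n - m)) + 1/2 * ((p - 2*n + m) * (p - 2*n + m))"
  by (simp add: field_simps)

theorem mainTheorem2:
  fixes Nx Ny Nz :: nat
    and lx ly lz h \<epsilon> S \<Delta>t Q :: real
    and g \<phi>m \<phi>n \<phi>p \<mu> :: grid
  assumes "Nx \<ge> 1" and "Ny \<ge> 1" and "Nz \<ge> 1"
    and "lx > 0" and "ly > 0" and "lz > 0"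
    and "h = lx / Nx" and "h = ly / Ny" and "h = lz / Nz"
    and "\<epsilon> > 0" and "S > 0" and "\<Delta>t > 0"
    and g_nonneg: "\<forall>i\<in>{1..Nx}. \<forall>j\<in>{1..Ny}. \<forall>k\<in>{1..Nz}. g i j k \<ge> 0"
    and "neumann Nx Ny Nz \<phi>m" and "neumann Nx Ny Nz \<phi>n"
    and "neumann Nx Ny Nz \<phi>p" and "neumann Nx Ny Nz \<mu>"
    and eq1: "\<forall>i\<in>{1..Nx}. \<forall>j\<in>{1..Ny}. \<forall>k\<in>{1..Nz}.
               (\<phi>p i j k - \<phi>n i j k) / \<Delta>t = - g i j k * \<mu> i j k"
    and eq2: "\<forall>i\<in>{1..Nx}. \<forall>j\<in>{1..Ny}. \<forall>k\<in>{1..Nz}.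
               \<mu> i j k = Q * dF (3/2 * \<phi>n i j k - 1/2 * \<phi>m i j k) / \<epsilon>^2
                 - lap_d h (\<lambda>a b c. (\<phi>p a b c + \<phi>n a b c) / 2) i j k
                 + S * ((\<phi>p i j k + \<phi>n i j k) / 2 - (3/2 * \<phi>n i j k - 1/2 * \<phi>m i j k))"
    and eq3: "inner_h Nx Ny Nz h (\<lambda>i j k. F (\<phi>p i j k) - F (\<phi>n i j k)) (\<lambda>_ _ _. 1)
              = Q * inner_h Nx Ny Nz h (\<lambda>i j k. dF (3/2 * \<phi>n i j k - 1/2 * \<phi>m i j k))
                                       (\<lambda>i j k. \<phi>p i j k - \<phi>n i j k)"
  shows "inner_h Nx Ny Nz h (\<lambda>i j k. F (\<phi>p i j k) - F (\<phi>n i j k)) (\<lambda>_ _ _. 1) / \<epsilon>^2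
         + 1/2 * ((norm_e Nx Ny Nz h \<phi>p)^2 - (norm_e Nx Ny Nz h \<phi>n)^2)
         + S/4 * ((norm_h Nx Ny Nz h (\<lambda>i j k. \<phi>p i j k - \<phi>n i j k))^2
                  - (norm_h Nx Ny Nz h (\<lambda>i j k. \<phi>n i j k - \<phi>m i j k))^2)
       = - \<Delta>t * (norm_h Nx Ny Nz h (\<lambda>i j k. sqrt (g i j k) * \<mu> i j k))^2
         - S/4 * (norm_h Nx Ny Nz h (\<lambda>i j k. \<phi>p i j k - 2 * \<phi>n i j k + \<phi>m i j k))^2
       \<and> - \<Delta>t * (norm_h Nx Ny Nz h (\<lambda>i j k. sqrt (g i j k) * \<mu> i j k))^2
         - S/4 * (norm_h Nx Ny Nz h (\<lambda>i j k. \<phi>p i j k - 2 * \<phi>n i j k + \<phi>m i j k))^2 \<le> 0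
       \<and> Etilde Nx Ny Nz h \<epsilon> S \<phi>p \<phi>n \<le> Etilde Nx Ny Nz h \<epsilon> S \<phi>n \<phi>m"
proof -
  note ax = assms(14-17)
  have hpos: "h > 0" using assms(1,4,7) by simp
  have dt: "\<Delta>t \<noteq> 0" using assms(12) by simp
  let ?a = "\<lambda>i j k. \<phi>p i j k - \<phi>n i j k"
  let ?b = "\<lambda>i j k. \<phi>n i j k - \<phi>m i j k"
  let ?c = "\<lambda>i j k. \<phi>p i j k - 2 * \<phi>n i j k + \<phi>m i j k"
  let ?u = "\<lambda>a b c. (\<phi>p a b c + \<phi>n a b c) / 2"
  let ?g = "\<lambda>i j k. sqrt (g i j k) * \<mu> i j k"
  let ?d = "\<lambda>i j k. dF (3/2 * \<phi>n i j k - 1/2 * \<phi>m i j k)"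
  have ih: "inner_h Nx Ny Nz h f k = h^3 * T3 Nx Ny Nz (\<lambda>a b c. f a b c * k a b c)" for f k
    unfolding inner_h_def T3_def ..
  have ih_nn: "inner_h Nx Ny Nz h f f \<ge> 0" for f
    unfolding inner_h_def using hpos by (intro mult_nonneg_nonneg) (simp_all add: sum_nonneg)
  have ie_nn: "inner_e Nx Ny Nz h f f \<ge> 0" for f
    unfolding inner_e_def using hpos by (intro mult_nonneg_nonneg add_nonneg_nonneg) (simp_all add: sum_nonneg)
  have nh: "(norm_h Nx Ny Nz h f)^2 = inner_h Nx Ny Nz h f f" for f
    unfolding norm_h_def using ih_nn by simp
  have ne: "(norm_e Nx Ny Nz h f)^2 = inner_e Nx Ny Nz h f f" for f
    unfolding norm_e_def using ie_nn by simp
  have un: "neumann Nx Ny Nz ?u" using ax(2,3) unfolding neumann_def by auto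
  have e1: "inner_h Nx Ny Nz h ?g ?g = - (1/\<Delta>t) * inner_h Nx Ny Nz h \<mu> ?a"
  proof -
    have "T3 Nx Ny Nz (\<lambda>i j k. ?g i j k * ?g i j k) = T3 Nx Ny Nz (\<lambda>i j k. (- (1/\<Delta>t)) * (\<mu> i j k * ?a i j k) + 0 * 0 + 0 * 0)"
    proof (rule T3_cong)
      fix i j k assume *: "i\<in>{1..Nx}" "j\<in>{1..Ny}" "k\<in>{1..Nz}"
      have g0: "g i j k \<ge> 0" using g_nonneg * by auto
      have aq: "?a i j k / \<Delta>t = - g i j k * \<mu> i j k" using eq1 * by auto
      show "?g i j k * ?g i j k = (- (1/\<Delta>t)) * (\<mu> i j k * ?a i j k) + 0 * 0 + 0 * 0"
        by (rule p1[OF g0 assms(12) aq])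
    qed
    also have "\<dots> = (- (1/\<Delta>t)) * T3 Nx Ny Nz (\<lambda>i j k. \<mu> i j k * ?a i j k) + 0 * T3 Nx Ny Nz (\<lambda>_ _ _. 0) + 0 * T3 Nx Ny Nz (\<lambda>_ _ _. 0)"
      by (rule T3_lin3)
    finally show ?thesis unfolding ih by simp
  qed
  have e2: "inner_h Nx Ny Nz h \<mu> ?a = Q/\<epsilon>^2 * inner_h Nx Ny Nz h ?d ?a
      + (-1) * inner_h Nx Ny Nz h (lap_d h ?u) ?a + S/2 * inner_h Nx Ny Nz h ?c ?a"
  proof -
    have "T3 Nx Ny Nz (\<lambda>i j k. \<mu> i j k * ?a i j k) = T3 Nx Ny Nz (\<lambda>i j k. Q/\<epsilon>^2 * (?d i j k * ?a i j k)
       + (-1) * (lap_d h ?u i j k * ?a i j k) + S/2 * (?c i j k * ?a i j k))"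
    proof (rule T3_cong)
      fix i j k assume *: "i\<in>{1..Nx}" "j\<in>{1..Ny}" "k\<in>{1..Nz}"
      show "\<mu> i j k * ?a i j k = Q/\<epsilon>^2 * (?d i j k * ?a i j k)
       + (-1) * (lap_d h ?u i j k * ?a i j k) + S/2 * (?c i j k * ?a i j k)"
        using eq2 * by (intro p2) blast
    qed
    also have "\<dots> = Q/\<epsilon>^2 * T3 Nx Ny Nz (\<lambda>i j k. ?d i j k * ?a i j k)
       + (-1) * T3 Nx Ny Nz (\<lambda>i j k. lap_d h ?u i j k * ?a i j k) + S/2 * T3 Nx Ny Nz (\<lambda>i j k. ?c i j k * ?a i j k)"
      by (rule T3_lin3)
    finally show ?thesis unfolding ih by (rule lin_h)
  qed
  have e3: "inner_h Nx Ny Nz h (lap_d h ?u) ?a = - inner_e Nx Ny Nz h ?u ?a"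
    using lap_inner[OF un] hpos by simp
  have e4: "inner_e Nx Ny Nz h ?u ?a = 1/2 * inner_e Nx Ny Nz h \<phi>p \<phi>p - 1/2 * inner_e Nx Ny Nz h \<phi>n \<phi>n"
    by (rule e4)
  have e5: "inner_h Nx Ny Nz h ?c ?a = 1/2 * inner_h Nx Ny Nz h ?a ?a + (-1/2) * inner_h Nx Ny Nz h ?b ?b
       + 1/2 * inner_h Nx Ny Nz h ?c ?c"
  proof -
    have "T3 Nx Ny Nz (\<lambda>i j k. ?c i j k * ?a i j k) = T3 Nx Ny Nz (\<lambda>i j k. 1/2 * (?a i j k * ?a i j k) + (-1/2) * (?b i j k * ?b i j k) + 1/2 * (?c i j k * ?c i j k))"
      by (rule T3_cong) (rule p3)
    also have "\<dots> = 1/2 * T3 Nx Ny Nz (\<lambda>i j k. ?a i j k * ?a i j k) + (-1/2) * T3 Nx Ny Nz (\<lambda>i j k. ?b i j k * ?b i j k) + 1/2 * T3 Nx Ny Nz (\<lambda>i j k. ?c i j k * ?c i j k)"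
      by (rule T3_lin3)
    finally show ?thesis unfolding ih by (rule lin_h)
  qed
  define Fd where "Fd = inner_h Nx Ny Nz h (\<lambda>i j k. F (\<phi>p i j k) - F (\<phi>n i j k)) (\<lambda>_ _ _. 1)"
  have e6: "Fd / \<epsilon>^2 = Q/\<epsilon>^2 * inner_h Nx Ny Nz h ?d ?a" unfolding Fd_def eq3 by simp
  have e7: "\<Delta>t * inner_h Nx Ny Nz h ?g ?g = - inner_h Nx Ny Nz h \<mu> ?a" unfolding e1 using dt by simp
  have e8: "S/2 * inner_h Nx Ny Nz h ?c ?a = S/4 * inner_h Nx Ny Nz h ?a ?a - S/4 * inner_h Nx Ny Nz h ?b ?b
       + S/4 * inner_h Nx Ny Nz h ?c ?c" unfolding e5 by (simp add: algebra_simps)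
  have G1: "Fd / \<epsilon>^2 + 1/2 * ((norm_e Nx Ny Nz h \<phi>p)^2 - (norm_e Nx Ny Nz h \<phi>n)^2)
         + S/4 * ((norm_h Nx Ny Nz h ?a)^2 - (norm_h Nx Ny Nz h ?b)^2)
       = - \<Delta>t * (norm_h Nx Ny Nz h ?g)^2 - S/4 * (norm_h Nx Ny Nz h ?c)^2"
    unfolding nh ne right_diff_distrib mult_minus_left using e2 e3 e4 e6 e7 e8 by linarith
  have G2: "- \<Delta>t * (norm_h Nx Ny Nz h ?g)^2 - S/4 * (norm_h Nx Ny Nz h ?c)^2 \<le> 0"
  proof -
    have "0 \<le> \<Delta>t * (norm_h Nx Ny Nz h ?g)^2" using assms(12) by simp
    moreover have "0 \<le> S/4 * (norm_h Nx Ny Nz h ?c)^2" using assms(11) by simp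
    ultimately show ?thesis by linarith
  qed
  have fd: "inner_h Nx Ny Nz h (\<lambda>i j k. F (\<phi>p i j k)) (\<lambda>_ _ _. 1) - inner_h Nx Ny Nz h (\<lambda>i j k. F (\<phi>n i j k)) (\<lambda>_ _ _. 1) = Fd"
    unfolding Fd_def inner_h_def by (simp add: sum_subtractf algebra_simps)
  have G3: "Etilde Nx Ny Nz h \<epsilon> S \<phi>p \<phi>n - Etilde Nx Ny Nz h \<epsilon> S \<phi>n \<phi>m
     = Fd / \<epsilon>^2 + 1/2 * ((norm_e Nx Ny Nz h \<phi>p)^2 - (norm_e Nx Ny Nz h \<phi>n)^2)
         + S/4 * ((norm_h Nx Ny Nz h ?a)^2 - (norm_h Nx Ny Nz h ?b)^2)"
    unfolding Etilde_def fd[symmetric] by (simp add: diff_divide_distrib algebra_simps)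
  show ?thesis using G1 G2 G3 unfolding Fd_def by linarith
qed

end
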